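(* Let $f,g$ be smooth functions on an interval $I\subset\mathbb{R}$ with $\dot f^2+\dot g^2=1$ and $f$ nowhere zero, let $l=l(v)$, $v\in J$, be an arc-length parametrized curve $c$ on the unit sphere $S^2(1)\subset\mathbb{R}^3=\mathrm{span}\{e_1,e_2,e_3\}$ with spherical curvature $\kappa(v)$, and let $M^2: z(u,v)=f(u)\,l(v)+g(u)\,e_4$ (a meridian surface). Assume $M^2$ belongs to the general class, i.e. $\kappa_m(u)\kappa(v)\neq0$, where $\kappa_m=\dot f\ddot g-\dot g\ddot f$. Let $a\neq0$ be a constant. Then $M^2$ has constant mean curvature $\|H\|=a$ if and only if the curve $c$ is a circle on $S^2(1)$ with constant spherical curvature $\kappa\equiv b$ for some constant $b\neq0$, and $f$ satisfies the differential equation $$\bigl(1-\dot f^2-f\ddot f\bigr)^2=(1-\dot f^2)\,(4a^2f^2-b^2).$$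
   Context: $\{e_1,e_2,e_3,e_4\}$ is the standard orthonormal basis of $\mathbb{R}^4$. For the arc-length curve $l(v)$ on $S^2(1)$ set $t=l'$ and let $n$ be the unit vector with $\{t,n,l\}$ orthonormal; the spherical curvature $\kappa$ is defined by $l'=t$, $t'=\kappa n-l$, $n'=-\kappa t$. $\kappa_m$ is the curvature of the meridian $u\mapsto(f(u),g(u))$. $H$ is the mean curvature vector field of $M^2$ in $\mathbb{R}^4$ (half the trace of the second fundamental form) and $\|H\|$ its length. *)

theory Defs
  imports "HOL-Analysis.Analysis" "HOL-Analysis.Cross3"
begin

definition vderiv :: "(real \<Rightarrow> 'a::real_normed_vector) \<Rightarrow> real \<Rightarrow> 'a" where
  "vderiv h = (\<lambda>t. vector_derivative h (at t))"

definition smooth_on :: "real set \<Rightarrow> (real \<Rightarrow> 'a::real_normed_vector) \<Rightarrow> bool" where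
  "smooth_on S h \<longleftrightarrow> (\<forall>n. \<forall>x\<in>S. ((vderiv ^^ n) h) differentiable (at x))"

text \<open>Tangent and spherical curvature of a curve l on S^2(1) in R^3,
  with n = l \<times> t, so that {t,n,l} is orthonormal and t' = kappa n - l.\<close>
definition sph_curvature :: "(real \<Rightarrow> real^3) \<Rightarrow> real \<Rightarrow> real" where
  "sph_curvature l v = vderiv (vderiv l) v \<bullet> cross3 (l v) (vderiv l v)"

definition meridian_curvature :: "(real \<Rightarrow> real) \<Rightarrow> (real \<Rightarrow> real) \<Rightarrow> real \<Rightarrow> real" where
  "meridian_curvature f g u =
     deriv f u * deriv (deriv g) u - deriv g u * deriv (deriv f) u"

definition pu :: "(real \<times> real \<Rightarrow> 'a::real_normed_vector) \<Rightarrow> real \<times> real \<Rightarrow> 'a" where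
  "pu z = (\<lambda>(u,v). vector_derivative (\<lambda>s. z (s,v)) (at u))"

definition pv :: "(real \<times> real \<Rightarrow> 'a::real_normed_vector) \<Rightarrow> real \<times> real \<Rightarrow> 'a" where
  "pv z = (\<lambda>(u,v). vector_derivative (\<lambda>s. z (u,s)) (at v))"

text \<open>Mean curvature vector field H = (1/2) trace of the second fundamental form:
  H = (1/2) (G h(z_u,z_u) - 2F h(z_u,z_v) + E h(z_v,z_v)) / (EG - F^2),
  where h(X,Y) is the normal component (orthogonal to span{z_u,z_v}) of the second derivatives.\<close>
definition normal_part :: "'a::real_inner \<Rightarrow> 'a \<Rightarrow> 'a \<Rightarrow> 'a" where
  "normal_part zu zv x =
     (let E = zu \<bullet> zu; F = zu \<bullet> zv; G = zv \<bullet> zv; D = E * G - F\<^sup>2 in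
      x - (((G * (x \<bullet> zu) - F * (x \<bullet> zv)) / D) *\<^sub>R zu
           + ((E * (x \<bullet> zv) - F * (x \<bullet> zu)) / D) *\<^sub>R zv))"

definition mean_curvature_vector ::
    "(real \<times> real \<Rightarrow> 'a::real_inner) \<Rightarrow> real \<times> real \<Rightarrow> 'a" where
  "mean_curvature_vector z p =
     (let zu = pu z p; zv = pv z p;
          zuu = pu (pu z) p; zuv = pv (pu z) p; zvv = pv (pv z) p;
          E = zu \<bullet> zu; F = zu \<bullet> zv; G = zv \<bullet> zv; D = E * G - F\<^sup>2 in
      (1/2) *\<^sub>R normal_part zu zv ((G / D) *\<^sub>R zuu - (2 * F / D) *\<^sub>R zuv + (E / D) *\<^sub>R zvv))"

text \<open>R^4 = R^3 (span e1,e2,e3) \<oplus> R e4; the meridian surface z(u,v) = f(u) l(v) + g(u) e4.\<close>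
definition meridian_surface ::
    "(real \<Rightarrow> real) \<Rightarrow> (real \<Rightarrow> real) \<Rightarrow> (real \<Rightarrow> real^3) \<Rightarrow> real \<times> real \<Rightarrow> (real^3) \<times> real" where
  "meridian_surface f g l = (\<lambda>(u,v). (f u *\<^sub>R l v, g u))"

end

theory Submission imports Defs begin

lemma gram3: fixes x L T :: "real^3"
  shows "(x \<bullet> cross3 L T)^2 = (x\<bullet>x)*(L\<bullet>L)*(T\<bullet>T) + 2*(x\<bullet>L)*(L\<bullet>T)*(T\<bullet>x) - (x\<bullet>x)*(L\<bullet>T)^2 - (L\<bullet>L)*(x\<bullet>T)^2 - (T\<bullet>T)*(x\<bullet>L)^2"
  unfolding cross3_def inner_vec_def sum_3 by (simp add: vector_def power2_eq_square algebra_simps)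

lemma vderiv_real: fixes f :: "real \<Rightarrow> real"
  assumes "f differentiable (at x)" shows "vderiv f x = deriv f x"
proof -
  have "(f has_vector_derivative vderiv f x) (at x)" using assms by (simp add: vderiv_def vector_derivative_works[symmetric])
  hence "(f has_real_derivative vderiv f x) (at x)" by (simp add: has_real_derivative_iff_has_vector_derivative)
  thus ?thesis by (rule DERIV_imp_deriv[symmetric])
qed

lemma ev_open: "open S \<Longrightarrow> x \<in> S \<Longrightarrow> (\<And>y. y\<in>S \<Longrightarrow> f y = g y) \<Longrightarrow> eventually (\<lambda>y. f y = g y) (nhds x)"
  unfolding eventually_nhds by blast

lemma smooth_012:
  assumes "smooth_on S h" "x \<in> S"
  shows "h differentiable (at x)" "vderiv h differentiable (at x)" "vderiv (vderiv h) differentiable (at x)"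
proof -
  have A: "\<forall>n. \<forall>x\<in>S. ((vderiv ^^ n) h) differentiable (at x)" using assms(1) by (simp add: smooth_on_def)
  show "h differentiable (at x)" using bspec[OF spec[OF A, of "0::nat"] assms(2)] by simp
  show "vderiv h differentiable (at x)" using bspec[OF spec[OF A, of "1::nat"] assms(2)] by simp
  show "vderiv (vderiv h) differentiable (at x)" using bspec[OF spec[OF A, of "2::nat"] assms(2)] by (simp add: numeral_2_eq_2)
qed

lemma smooth_real:
  fixes f :: "real \<Rightarrow> real"
  assumes "smooth_on I f" "open I" "x \<in> I"
  shows "(f has_real_derivative deriv f x) (at x)"
    "(deriv f has_real_derivative deriv (deriv f) x) (at x)"
    "isCont (deriv (deriv f)) x"
proof -
  have e1: "\<And>y. y\<in>I \<Longrightarrow> vderiv f y = deriv f y" using smooth_012(1)[OF assms(1)] vderiv_real by blast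
  show "(f has_real_derivative deriv f x) (at x)"
    using smooth_012(1)[OF assms(1,3)] DERIV_deriv_iff_real_differentiable by blast
  have "(vderiv f has_real_derivative deriv (vderiv f) x) (at x)"
    using smooth_012(2)[OF assms(1,3)] DERIV_deriv_iff_real_differentiable by blast
  moreover have "deriv (vderiv f) x = deriv (deriv f) x"
    by (rule deriv_cong_ev[OF ev_open[OF assms(2,3)]]) (auto simp: e1)
  ultimately show "(deriv f has_real_derivative deriv (deriv f) x) (at x)"
    using has_field_derivative_transform_within_open[OF _ assms(2,3)] e1 by metis
  have e2: "\<And>y. y\<in>I \<Longrightarrow> vderiv (vderiv f) y = deriv (deriv f) y"
  proof -
    fix y assume y: "y \<in> I"
    have "vderiv (vderiv f) y = deriv (vderiv f) y" by (rule vderiv_real[OF smooth_012(2)[OF assms(1) y]])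
    also have "\<dots> = deriv (deriv f) y"
      by (rule deriv_cong_ev[OF ev_open[OF assms(2) y]]) (auto simp: e1)
    finally show "vderiv (vderiv f) y = deriv (deriv f) y" .
  qed
  have "isCont (vderiv (vderiv f)) x"
    using smooth_012(3)[OF assms(1,3)] differentiable_imp_continuous_within by blast
  thus "isCont (deriv (deriv f)) x"
    using isCont_cong[OF ev_open[OF assms(2,3)], of "vderiv (vderiv f)" "deriv (deriv f)"] e2 by blast
qed

lemma H_alg:
  fixes L T T' :: "real^3" and zu zv zuu zuv zvv :: "(real^3) \<times> real"
  assumes LL: "L\<bullet>L = 1" and LT: "L\<bullet>T = 0" and TT: "T\<bullet>T = 1" and TT': "T\<bullet>T' = 0" and LT': "L\<bullet>T' = -1"
    and T'T': "T'\<bullet>T' = k^2 + 1" and a1b1: "fa^2 + ga^2 = 1" and ab: "fa*fb + ga*gb = 0" and Fz: "Fz \<noteq> 0"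
    and zu: "zu = (fa *\<^sub>R L, ga)" and zv: "zv = (Fz *\<^sub>R T, 0)" and zuu: "zuu = (fb *\<^sub>R L, gb)"
    and zuv: "zuv = (fa *\<^sub>R T, 0)" and zvv: "zvv = (Fz *\<^sub>R T', 0)"
  shows "(norm ((1/2) *\<^sub>R normal_part zu zv (((zv\<bullet>zv) / ((zu\<bullet>zu)*(zv\<bullet>zv) - (zu\<bullet>zv)\<^sup>2)) *\<^sub>R zuu
            - (2*(zu\<bullet>zv) / ((zu\<bullet>zu)*(zv\<bullet>zv) - (zu\<bullet>zv)\<^sup>2)) *\<^sub>R zuv
            + ((zu\<bullet>zu)/((zu\<bullet>zu)*(zv\<bullet>zv) - (zu\<bullet>zv)\<^sup>2)) *\<^sub>R zvv)))\<^sup>2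
     = (fb^2 + gb^2 - 2*fb/Fz + (k^2+1-fa^2)/Fz^2)/4"
proof -
  have TL: "T\<bullet>L = 0" using LT by (simp add: inner_commute)
  have T'L: "T'\<bullet>L = -1" using LT' by (simp add: inner_commute)
  have T'T: "T'\<bullet>T = 0" using TT' by (simp add: inner_commute)
  have E: "zu\<bullet>zu = 1" using a1b1 LL by (simp add: zu power2_eq_square)
  have F: "zu\<bullet>zv = 0" using LT by (simp add: zu zv)
  have G: "zv\<bullet>zv = Fz^2" using TT by (simp add: zv power2_eq_square)
  define X where "X = (fb *\<^sub>R L + (1/Fz) *\<^sub>R T', gb)"
  have c1: "Fz^2 / (1 * Fz^2 - 0^2) = 1" using Fz by simp
  have Xeq: "((zv\<bullet>zv) / ((zu\<bullet>zu)*(zv\<bullet>zv) - (zu\<bullet>zv)\<^sup>2)) *\<^sub>R zuu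
            - (2*(zu\<bullet>zv) / ((zu\<bullet>zu)*(zv\<bullet>zv) - (zu\<bullet>zv)\<^sup>2)) *\<^sub>R zuv
            + ((zu\<bullet>zu)/((zu\<bullet>zu)*(zv\<bullet>zv) - (zu\<bullet>zv)\<^sup>2)) *\<^sub>R zvv = X"
    unfolding E F G using Fz by (simp add: X_def zuu zvv power2_eq_square)
  have Xu: "X\<bullet>zu = -fa/Fz"
  proof -
    have "X\<bullet>zu = (fa*fb + ga*gb) - fa/Fz" using LL T'L by (simp add: X_def zu inner_add_left algebra_simps)
    thus ?thesis using ab by simp
  qed
  have Xv: "X\<bullet>zv = 0" using LT T'T by (simp add: X_def zv inner_add_left)
  have c3: "(Fz\<^sup>2 * (- fa / Fz) - 0 * 0) / (1 * Fz\<^sup>2 - 0\<^sup>2) = -fa/Fz" using Fz by (simp add: power2_eq_square)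
  have N: "normal_part zu zv X = X + (fa/Fz) *\<^sub>R zu"
    unfolding normal_part_def Let_def E F G Xu Xv c3 by simp
  have XX: "X\<bullet>X = fb^2 - 2*fb/Fz + (k^2+1)/Fz^2 + gb^2"
    using LL LT' T'L T'T' by (simp add: X_def inner_add_left inner_add_right power2_eq_square algebra_simps add_divide_distrib)
  have "(norm ((1/2) *\<^sub>R (X + (fa/Fz) *\<^sub>R zu)))\<^sup>2 = (1/4) * (X\<bullet>X + 2*(fa/Fz)*(X\<bullet>zu) + (fa/Fz)^2 * (zu\<bullet>zu))"
    unfolding power2_norm_eq_inner by (simp add: inner_add_left inner_add_right inner_commute power2_eq_square algebra_simps)
  also have "\<dots> = (fb^2 + gb^2 - 2*fb/Fz + (k^2+1-fa^2)/Fz^2)/4"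
    unfolding XX Xu E using Fz by (simp add: field_simps power2_eq_square)
  finally show ?thesis unfolding Xeq N .
qed

lemma deriv_const_zero:
  fixes h :: "real \<Rightarrow> real"
  assumes "open S" "x \<in> S" "(h has_real_derivative d) (at x)" "\<And>y. y \<in> S \<Longrightarrow> h y = c"
  shows "d = 0"
proof -
  obtain e where e: "e > 0" "ball x e \<subseteq> S" using assms(1,2) by (rule openE)
  have "\<forall>y. \<bar>x - y\<bar> < e \<longrightarrow> h x = h y"
  proof (intro allI impI)
    fix y assume "\<bar>x - y\<bar> < e"
    hence "y \<in> S" using e(2) by (auto simp: dist_real_def)
    thus "h x = h y" using assms(2,4) by simp
  qed
  thus ?thesis using DERIV_local_const[OF assms(3) e(1)] by blast
qed

lemma inner_deriv:
  fixes p q :: "real \<Rightarrow> 'a::real_inner"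
  assumes "(p has_vector_derivative p') (at x)" "(q has_vector_derivative q') (at x)"
  shows "((\<lambda>s. p s \<bullet> q s) has_real_derivative (p x \<bullet> q' + p' \<bullet> q x)) (at x)"
  using bounded_bilinear.has_vector_derivative[OF bounded_bilinear_inner assms]
  by (simp add: has_real_derivative_iff_has_vector_derivative)

lemma l_facts:
  fixes l :: "real \<Rightarrow> real^3"
  assumes J: "open J" "v \<in> J" and sph: "\<forall>s\<in>J. norm (l s) = 1" and al: "\<forall>s\<in>J. norm (vderiv l s) = 1"
    and d1: "\<And>s. s\<in>J \<Longrightarrow> (l has_vector_derivative vderiv l s) (at s)"
    and d2: "\<And>s. s\<in>J \<Longrightarrow> (vderiv l has_vector_derivative vderiv (vderiv l) s) (at s)"
  shows "l v \<bullet> l v = 1" "l v \<bullet> vderiv l v = 0" "vderiv l v \<bullet> vderiv l v = 1"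
    "vderiv l v \<bullet> vderiv (vderiv l) v = 0" "l v \<bullet> vderiv (vderiv l) v = -1"
proof -
  have LL: "\<And>s. s\<in>J \<Longrightarrow> l s \<bullet> l s = 1" using sph by (simp add: power2_norm_eq_inner[symmetric])
  have TT: "\<And>s. s\<in>J \<Longrightarrow> vderiv l s \<bullet> vderiv l s = 1" using al by (simp add: power2_norm_eq_inner[symmetric])
  have LT: "\<And>s. s\<in>J \<Longrightarrow> l s \<bullet> vderiv l s = 0"
  proof -
    fix s assume s: "s \<in> J"
    have "l s \<bullet> vderiv l s + vderiv l s \<bullet> l s = 0"
      by (rule deriv_const_zero[OF J(1) s inner_deriv[OF d1[OF s] d1[OF s]], of 1]) (simp add: LL)
    thus "l s \<bullet> vderiv l s = 0" by (simp add: inner_commute)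
  qed
  show "l v \<bullet> l v = 1" "l v \<bullet> vderiv l v = 0" "vderiv l v \<bullet> vderiv l v = 1" using LL LT TT J(2) by auto
  have "vderiv l v \<bullet> vderiv (vderiv l) v + vderiv (vderiv l) v \<bullet> vderiv l v = 0"
    by (rule deriv_const_zero[OF J inner_deriv[OF d2[OF J(2)] d2[OF J(2)]], of 1]) (simp add: TT)
  thus "vderiv l v \<bullet> vderiv (vderiv l) v = 0" by (simp add: inner_commute)
  have "l v \<bullet> vderiv (vderiv l) v + vderiv l v \<bullet> vderiv l v = 0"
    by (rule deriv_const_zero[OF J inner_deriv[OF d1[OF J(2)] d2[OF J(2)]], of 0]) (simp add: LT)
  thus "l v \<bullet> vderiv (vderiv l) v = -1" using TT J(2) by simp
qed

lemma surf:
  fixes f g :: "real \<Rightarrow> real" and l :: "real \<Rightarrow> real^3"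
  assumes I: "open I" "u \<in> I" and J: "open J" "v \<in> J"
    and df: "\<And>s. s\<in>I \<Longrightarrow> (f has_real_derivative deriv f s) (at s)"
    and dg: "\<And>s. s\<in>I \<Longrightarrow> (g has_real_derivative deriv g s) (at s)"
    and df2: "(deriv f has_real_derivative deriv (deriv f) u) (at u)"
    and dg2: "(deriv g has_real_derivative deriv (deriv g) u) (at u)"
    and d1: "\<And>s. s\<in>J \<Longrightarrow> (l has_vector_derivative vderiv l s) (at s)"
    and d2: "(vderiv l has_vector_derivative vderiv (vderiv l) v) (at v)"
  shows "pu (meridian_surface f g l) (u,v) = (deriv f u *\<^sub>R l v, deriv g u)"
    "pv (meridian_surface f g l) (u,v) = (f u *\<^sub>R vderiv l v, 0)"
    "pu (pu (meridian_surface f g l)) (u,v) = (deriv (deriv f) u *\<^sub>R l v, deriv (deriv g) u)"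
    "pv (pu (meridian_surface f g l)) (u,v) = (deriv f u *\<^sub>R vderiv l v, 0)"
    "pv (pv (meridian_surface f g l)) (u,v) = (f u *\<^sub>R vderiv (vderiv l) v, 0)"
proof -
  let ?z = "meridian_surface f g l"
  have pu_eq: "\<And>s w. s\<in>I \<Longrightarrow> pu ?z (s,w) = (deriv f s *\<^sub>R l w, deriv g s)"
  proof -
    fix s w assume s: "s \<in> I"
    have "((\<lambda>t. (f t *\<^sub>R l w, g t)) has_vector_derivative (deriv f s *\<^sub>R l w, deriv g s)) (at s)"
      using has_vector_derivative_Pair[OF has_vector_derivative_scaleR[OF df[OF s] has_vector_derivative_const]
          dg[OF s, unfolded has_real_derivative_iff_has_vector_derivative]]
      by simp
    thus "pu ?z (s,w) = (deriv f s *\<^sub>R l w, deriv g s)"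
      unfolding pu_def meridian_surface_def by (simp add: vector_derivative_at)
  qed
  show "pu ?z (u,v) = (deriv f u *\<^sub>R l v, deriv g u)" using pu_eq I(2) .
  have pv_eq: "\<And>s w. s\<in>J \<Longrightarrow> pv ?z (w,s) = (f w *\<^sub>R vderiv l s, 0)"
  proof -
    fix s w assume s: "s \<in> J"
    have "((\<lambda>t. (f w *\<^sub>R l t, g w)) has_vector_derivative (f w *\<^sub>R vderiv l s, 0)) (at s)"
      using has_vector_derivative_Pair[OF has_vector_derivative_scaleR[OF DERIV_const d1[OF s]]
          has_vector_derivative_const]
      by simp
    thus "pv ?z (w,s) = (f w *\<^sub>R vderiv l s, 0)"
      unfolding pv_def meridian_surface_def by (simp add: vector_derivative_at)
  qed
  show "pv ?z (u,v) = (f u *\<^sub>R vderiv l v, 0)" using pv_eq J(2) .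
  have "((\<lambda>t. (deriv f t *\<^sub>R l v, deriv g t)) has_vector_derivative (deriv (deriv f) u *\<^sub>R l v, deriv (deriv g) u)) (at u)"
    using has_vector_derivative_Pair[OF has_vector_derivative_scaleR[OF df2 has_vector_derivative_const]
          dg2[unfolded has_real_derivative_iff_has_vector_derivative]]
    by simp
  hence "((\<lambda>t. pu ?z (t,v)) has_vector_derivative (deriv (deriv f) u *\<^sub>R l v, deriv (deriv g) u)) (at u)"
    by (rule has_vector_derivative_transform_within_open[OF _ I]) (simp add: pu_eq)
  thus "pu (pu ?z) (u,v) = (deriv (deriv f) u *\<^sub>R l v, deriv (deriv g) u)"
    unfolding pu_def[of "pu ?z"] by (simp add: vector_derivative_at)
  have "((\<lambda>t. (deriv f u *\<^sub>R l t, deriv g u)) has_vector_derivative (deriv f u *\<^sub>R vderiv l v, 0)) (at v)"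
    using has_vector_derivative_Pair[OF has_vector_derivative_scaleR[OF DERIV_const d1[OF J(2)]]
          has_vector_derivative_const]
    by simp
  hence "((\<lambda>t. pu ?z (u,t)) has_vector_derivative (deriv f u *\<^sub>R vderiv l v, 0)) (at v)"
    using pu_eq[OF I(2)] by simp
  thus "pv (pu ?z) (u,v) = (deriv f u *\<^sub>R vderiv l v, 0)"
    unfolding pv_def[of "pu ?z"] by (simp add: vector_derivative_at)
  have "((\<lambda>t. (f u *\<^sub>R vderiv l t, 0::real)) has_vector_derivative (f u *\<^sub>R vderiv (vderiv l) v, 0)) (at v)"
    using has_vector_derivative_Pair[OF has_vector_derivative_scaleR[OF DERIV_const d2]
          has_vector_derivative_const]
    by simp
  hence "((\<lambda>t. pv ?z (u,t)) has_vector_derivative (f u *\<^sub>R vderiv (vderiv l) v, 0)) (at v)"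
    by (rule has_vector_derivative_transform_within_open[OF _ J]) (simp add: pv_eq)
  thus "pv (pv ?z) (u,v) = (f u *\<^sub>R vderiv (vderiv l) v, 0)"
    unfolding pv_def[of "pv ?z"] by (simp add: vector_derivative_at)
qed

theorem proposition5p2:
  fixes f g :: "real \<Rightarrow> real" and l :: "real \<Rightarrow> real^3"
    and I J :: "real set" and a :: real
  assumes I: "is_interval I" "open I" "I \<noteq> {}"
    and J: "is_interval J" "open J" "J \<noteq> {}"
    and fg_smooth: "smooth_on I f" "smooth_on I g"
    and fg_unit: "\<forall>u\<in>I. (deriv f u)\<^sup>2 + (deriv g u)\<^sup>2 = 1"
    and f_nz: "\<forall>u\<in>I. f u \<noteq> 0"
    and l_smooth: "smooth_on J l"
    and l_sphere: "\<forall>v\<in>J. norm (l v) = 1"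
    and l_arclength: "\<forall>v\<in>J. norm (vderiv l v) = 1"
    and general: "\<forall>u\<in>I. \<forall>v\<in>J. meridian_curvature f g u * sph_curvature l v \<noteq> 0"
    and a: "a > 0"
  shows "(\<forall>u\<in>I. \<forall>v\<in>J. norm (mean_curvature_vector (meridian_surface f g l) (u,v)) = a)
     \<longleftrightarrow> (\<exists>b. b \<noteq> 0 \<and> (\<forall>v\<in>J. sph_curvature l v = b) \<and>
            (\<forall>u\<in>I. (1 - (deriv f u)\<^sup>2 - f u * deriv (deriv f) u)\<^sup>2
                     = (1 - (deriv f u)\<^sup>2) * (4 * a\<^sup>2 * (f u)\<^sup>2 - b\<^sup>2)))"
proof -
  let ?z = "meridian_surface f g l"
  define \<kappa> where "\<kappa> = sph_curvature l"
  define Phi where "Phi = (\<lambda>k u. (f u)^2*((deriv (deriv f) u)^2 + (deriv (deriv g) u)^2)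
      - 2*deriv (deriv f) u * f u + k^2 + 1 - (deriv f u)^2 - 4*a^2*(f u)^2)"
  have df: "\<And>s. s\<in>I \<Longrightarrow> (f has_real_derivative deriv f s) (at s)" using smooth_real(1)[OF fg_smooth(1) I(2)] .
  have dg: "\<And>s. s\<in>I \<Longrightarrow> (g has_real_derivative deriv g s) (at s)" using smooth_real(1)[OF fg_smooth(2) I(2)] .
  have df2: "\<And>s. s\<in>I \<Longrightarrow> (deriv f has_real_derivative deriv (deriv f) s) (at s)" using smooth_real(2)[OF fg_smooth(1) I(2)] .
  have dg2: "\<And>s. s\<in>I \<Longrightarrow> (deriv g has_real_derivative deriv (deriv g) s) (at s)" using smooth_real(2)[OF fg_smooth(2) I(2)] .
  have cf2: "\<And>s. s\<in>I \<Longrightarrow> isCont (deriv (deriv f)) s" using smooth_real(3)[OF fg_smooth(1) I(2)] .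
  have cg2: "\<And>s. s\<in>I \<Longrightarrow> isCont (deriv (deriv g)) s" using smooth_real(3)[OF fg_smooth(2) I(2)] .
  have d1: "(l has_vector_derivative vderiv l s) (at s)" if "s\<in>J" for s
    using smooth_012(1)[OF l_smooth that] by (simp add: vderiv_def vector_derivative_works[symmetric])
  have d2: "(vderiv l has_vector_derivative vderiv (vderiv l) s) (at s)" if "s\<in>J" for s
    using smooth_012(2)[OF l_smooth that]
    by (simp add: vderiv_def[of "vderiv l"] vector_derivative_works[symmetric])
  have ab: "deriv f u * deriv (deriv f) u + deriv g u * deriv (deriv g) u = 0" if u: "u\<in>I" for u
  proof -
    have "((\<lambda>s. (deriv f s)^2 + (deriv g s)^2) has_real_derivative
          2*(deriv f u * deriv (deriv f) u + deriv g u * deriv (deriv g) u)) (at u)"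
      by (rule derivative_eq_intros df2[OF u] dg2[OF u] refl | simp add: algebra_simps)+
    hence "2*(deriv f u * deriv (deriv f) u + deriv g u * deriv (deriv g) u) = 0"
      by (rule deriv_const_zero[OF I(2) u, of _ _ 1]) (simp add: fg_unit)
    thus ?thesis by simp
  qed
  have alg: "(deriv g u)^2 * Phi k u = (1 - (deriv f u)\<^sup>2 - f u * deriv (deriv f) u)\<^sup>2
                     - (1 - (deriv f u)\<^sup>2) * (4 * a\<^sup>2 * (f u)\<^sup>2 - k\<^sup>2)" if u: "u\<in>I" for u k
  proof -
    have h1: "(deriv f u)\<^sup>2 + (deriv g u)\<^sup>2 = 1" using fg_unit u by blast
    have h2: "deriv f u * deriv (deriv f) u + deriv g u * deriv (deriv g) u = 0" using ab u .
    show ?thesis using h1 h2 unfolding Phi_def by algebra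
  qed
  have key: "norm (mean_curvature_vector ?z (u,v)) = a \<longleftrightarrow> Phi (\<kappa> v) u = 0" if u: "u\<in>I" and v: "v\<in>J" for u v
  proof -
    note lf = l_facts[OF J(2) v l_sphere l_arclength d1 d2]
    have T'L: "vderiv (vderiv l) v \<bullet> l v = -1" using lf(5) by (simp add: inner_commute)
    have T'T: "vderiv (vderiv l) v \<bullet> vderiv l v = 0" using lf(4) by (simp add: inner_commute)
    have "(\<kappa> v)^2 = vderiv (vderiv l) v \<bullet> vderiv (vderiv l) v - 1"
      using gram3[of "vderiv (vderiv l) v" "l v" "vderiv l v"] lf T'L T'T
      by (simp add: \<kappa>_def sph_curvature_def)
    hence T'T': "vderiv (vderiv l) v \<bullet> vderiv (vderiv l) v = (\<kappa> v)^2 + 1" by simp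
    have F0: "f u \<noteq> 0" using f_nz u by blast
    have N: "(norm (mean_curvature_vector ?z (u,v)))^2 = ((deriv (deriv f) u)^2 + (deriv (deriv g) u)^2
         - 2*deriv (deriv f) u/f u + ((\<kappa> v)^2+1-(deriv f u)^2)/(f u)^2)/4"
      unfolding mean_curvature_vector_def Let_def
      by (rule H_alg[where L="l v" and T="vderiv l v" and T'="vderiv (vderiv l) v" and k="\<kappa> v"
            and fa="deriv f u" and ga="deriv g u" and fb="deriv (deriv f) u" and gb="deriv (deriv g) u" and Fz="f u",
            OF lf(1-5) T'T' _ ab[OF u] F0]) (use fg_unit u surf[OF I(2) u J(2) v df dg df2[OF u] dg2[OF u] d1 d2[OF v]] in simp_all)
    have M: "4*(f u)^2 * ((deriv (deriv f) u)^2 + (deriv (deriv g) u)^2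
         - 2*deriv (deriv f) u/f u + ((\<kappa> v)^2+1-(deriv f u)^2)/(f u)^2)/4 = Phi (\<kappa> v) u + 4*a^2*(f u)^2"
      using F0 by (simp add: Phi_def field_simps power2_eq_square)
    have "norm (mean_curvature_vector ?z (u,v)) = a \<longleftrightarrow> (norm (mean_curvature_vector ?z (u,v)))^2 = a^2"
      using a by simp
    also have "\<dots> \<longleftrightarrow> 4*(f u)^2 * (norm (mean_curvature_vector ?z (u,v)))^2 = 4*(f u)^2 * a^2"
      using F0 by simp
    also have "\<dots> \<longleftrightarrow> Phi (\<kappa> v) u = 0" unfolding N using M by (simp add: algebra_simps)
    finally show ?thesis .
  qed
  have knz: "\<And>v. v\<in>J \<Longrightarrow> \<kappa> v \<noteq> 0" and mnz: "\<And>u. u\<in>I \<Longrightarrow> meridian_curvature f g u \<noteq> 0"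
    using general I(3) J(3) unfolding \<kappa>_def by fastforce+
  show ?thesis
  proof
    assume H: "\<forall>u\<in>I. \<forall>v\<in>J. norm (mean_curvature_vector ?z (u,v)) = a"
    obtain u0 where u0: "u0 \<in> I" using I(3) by blast
    obtain v0 where v0: "v0 \<in> J" using J(3) by blast
    define b where "b = \<kappa> v0"
    have P: "\<And>u v. u\<in>I \<Longrightarrow> v\<in>J \<Longrightarrow> Phi (\<kappa> v) u = 0" using H key by blast
    have sq: "(\<kappa> v)^2 = b^2" if v: "v\<in>J" for v
      using P[OF u0 v] P[OF u0 v0] unfolding Phi_def b_def by simp
    have cont: "continuous_on J \<kappa>"
    proof (rule continuous_at_imp_continuous_on, intro ballI)
      fix v assume v: "v \<in> J"
      have c0: "isCont l v" using d1[OF v] by (rule has_vector_derivative_continuous)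
      have c1: "isCont (vderiv l) v" using d2[OF v] by (rule has_vector_derivative_continuous)
      have c2: "isCont (vderiv (vderiv l)) v"
        using smooth_012(3)[OF l_smooth v] differentiable_imp_continuous_within by blast
      show "isCont \<kappa> v" unfolding \<kappa>_def sph_curvature_def
        by (intro continuous_intros continuous_cross c0 c1 c2)
    qed
    have conn: "connected (\<kappa> ` J)"
      by (rule connected_continuous_image[OF cont is_interval_connected[OF J(1)]])
    have kb: "\<forall>v\<in>J. \<kappa> v = b"
    proof (rule ccontr)
      assume "\<not> (\<forall>v\<in>J. \<kappa> v = b)"
      then obtain v where v: "v\<in>J" "\<kappa> v \<noteq> b" by blast
      hence mb: "\<kappa> v = -b" using sq[OF v(1)] by (metis power2_eq_iff)
      have bnz: "b \<noteq> 0" using knz[OF v0] b_def by simp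
      have i1: "-b \<in> \<kappa> ` J" using v mb by (metis image_eqI)
      have i2: "b \<in> \<kappa> ` J" using v0 b_def by blast
      have "0 \<in> \<kappa> ` J"
      proof (cases "b > 0")
        case True
        show ?thesis
          by (rule connectedD_interval[OF conn, of "-b" b]) (use True i1 i2 in auto)
      next
        case False
        hence "b < 0" using bnz by simp
        show ?thesis
          by (rule connectedD_interval[OF conn, of b "-b"]) (use \<open>b < 0\<close> i1 i2 in auto)
      qed
      then obtain w where "w \<in> J" "\<kappa> w = 0" by (metis imageE)
      thus False using knz by blast
    qed
    show "\<exists>b. b \<noteq> 0 \<and> (\<forall>v\<in>J. sph_curvature l v = b) \<and>
            (\<forall>u\<in>I. (1 - (deriv f u)\<^sup>2 - f u * deriv (deriv f) u)\<^sup>2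
                     = (1 - (deriv f u)\<^sup>2) * (4 * a\<^sup>2 * (f u)\<^sup>2 - b\<^sup>2))"
    proof (intro exI conjI ballI)
      show "b \<noteq> 0" using knz[OF v0] b_def by simp
      show "\<And>v. v\<in>J \<Longrightarrow> sph_curvature l v = b" using kb unfolding \<kappa>_def by blast
      fix u assume u: "u \<in> I"
      have "(deriv g u)^2 * Phi b u = 0" using P[OF u v0] b_def by simp
      thus "(1 - (deriv f u)\<^sup>2 - f u * deriv (deriv f) u)\<^sup>2
                     = (1 - (deriv f u)\<^sup>2) * (4 * a\<^sup>2 * (f u)\<^sup>2 - b\<^sup>2)" using alg[OF u, of b] by simp
    qed
  next
    assume "\<exists>b. b \<noteq> 0 \<and> (\<forall>v\<in>J. sph_curvature l v = b) \<and>
            (\<forall>u\<in>I. (1 - (deriv f u)\<^sup>2 - f u * deriv (deriv f) u)\<^sup>2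
                     = (1 - (deriv f u)\<^sup>2) * (4 * a\<^sup>2 * (f u)\<^sup>2 - b\<^sup>2))"
    then obtain b where kb: "\<forall>v\<in>J. \<kappa> v = b" and ode: "\<forall>u\<in>I. (1 - (deriv f u)\<^sup>2 - f u * deriv (deriv f) u)\<^sup>2
                     = (1 - (deriv f u)\<^sup>2) * (4 * a\<^sup>2 * (f u)\<^sup>2 - b\<^sup>2)" unfolding \<kappa>_def by blast
    have Z: "(deriv g u)^2 * Phi b u = 0" if u: "u \<in> I" for u using alg[OF u, of b] ode u by simp
    have Pb: "Phi b u = 0" if u: "u \<in> I" for u
    proof (rule ccontr)
      assume nz: "Phi b u \<noteq> 0"
      hence g0: "deriv g u = 0" using Z[OF u] by simp
      have cP: "isCont (Phi b) u" unfolding Phi_def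
        using DERIV_isCont[OF df[OF u]] DERIV_isCont[OF df2[OF u]] cf2[OF u] cg2[OF u]
        by (intro continuous_intros) auto
      have e1: "eventually (\<lambda>y. Phi b y \<noteq> 0) (at u)"
        using tendsto_imp_eventually_ne[OF cP[unfolded continuous_at] nz] .
      have e2: "eventually (\<lambda>y. y \<in> I) (at u)"
        using eventually_nhds_in_open[OF I(2) u] eventually_nhds_conv_at by blast
      have "eventually (\<lambda>y. deriv g y = 0) (at u)"
        using eventually_conj[OF e1 e2] by (rule eventually_mono) (use Z in auto)
      hence "eventually (\<lambda>y. deriv g y = 0) (nhds u)" using g0 eventually_nhds_conv_at by blast
      hence "deriv (deriv g) u = deriv (\<lambda>_. 0::real) u" by (rule deriv_cong_ev) simp
      hence "deriv (deriv g) u = 0" by simp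
      hence "meridian_curvature f g u = 0" using g0 by (simp add: meridian_curvature_def)
      thus False using mnz[OF u] by blast
    qed
    show "\<forall>u\<in>I. \<forall>v\<in>J. norm (mean_curvature_vector ?z (u,v)) = a"
      using key Pb kb by auto
  qed
qed

end
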